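(* Suppose (C2) holds. Then the LMS sampling design is a high entropy sampling design. Moreover, under each of SRSWOR, the LMS design and any HE$\pi$PS design, for $\mathbb P$-almost every $\omega$ there are constants $M,M'>0$ such that for all sufficiently large $\nu$, $M\le n^{-1}N\pi_i\le M'$ for all $1\le i\le N$.
   Context: Sequence of nested finite populations of $N=N_\nu$ units with sample size $n=n_\nu<N$, $N,n\to\infty$ as $\nu\to\infty$; size variable values $X_1,\dots,X_N$ are i.i.d. positive random variables on $(\Omega,\mathcal F,\mathbb P)$ (part of i.i.d. population records). A sampling design is $P(s,\omega)$, a probability on the size-$n$ subsets $s$ for each $\omega$; $\pi_i=\sum_{s\ni i}P(s,\omega)$. SRSWOR: each $s$ with probability $\binom Nn^{-1}$. LMS: first unit $U_i$ drawn with probability $X_i/\sum_jX_j$, then $n-1$ units by SRSWOR from the remaining $N-1$. Rejective design (parameters $\alpha_i>0$, $\sum\alpha_i=1$): $n$ draws with replacement with probabilities $\alpha_i$, repeated until $n$ distinct units are drawn. A design is high entropy if $\sum_sP(s,\omega)\log(P(s,\omega)/R(s,\omega))\to0$ as $\nu\to\infty$ a.s. $[\mathbb P]$ for some rejective design $R(s,\omega)$. $\pi$PS: $\pi_i=nX_i/\sum_jX_j$. HE$\pi$PS: high entropy and $\pi$PS. (C2): $X_i\le b$ a.s. for some $0<b<\infty$, $E(X_i^{-2})<\infty$, and $\max_{i\le N}X_i/\min_{i\le N}X_i=O(1)$ as $\nu\to\infty$ a.s. $[\mathbb P]$. *)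

theory Defs
  imports "HOL-Probability.Probability"
begin

definition samples :: "nat \<Rightarrow> nat \<Rightarrow> nat set set" where
  "samples N n = {s. s \<subseteq> {1..N} \<and> card s = n}"

definition is_design :: "nat \<Rightarrow> nat \<Rightarrow> (nat set \<Rightarrow> real) \<Rightarrow> bool" where
  "is_design N n p \<longleftrightarrow> (\<forall>s. 0 \<le> p s) \<and> (\<forall>s. p s \<noteq> 0 \<longrightarrow> s \<in> samples N n)
     \<and> sum p (samples N n) = 1"

definition incl_prob :: "nat \<Rightarrow> nat \<Rightarrow> (nat set \<Rightarrow> real) \<Rightarrow> nat \<Rightarrow> real" where
  "incl_prob N n p i = (\<Sum>s\<in>{s\<in>samples N n. i \<in> s}. p s)"

definition srswor :: "nat \<Rightarrow> nat \<Rightarrow> nat set \<Rightarrow> real" where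
  "srswor N n s = (if s \<in> samples N n then 1 / real (N choose n) else 0)"

text \<open>LMS design: first unit drawn with probability X_i / sum X_j, then n-1 units by SRSWOR
  from the remaining N-1. Hence P(s) = sum over i in s of (X_i / sum_j X_j) / binom(N-1,n-1).\<close>
definition lms :: "nat \<Rightarrow> nat \<Rightarrow> (nat \<Rightarrow> real) \<Rightarrow> nat set \<Rightarrow> real" where
  "lms N n x s = (if s \<in> samples N n then
      (\<Sum>i\<in>s. x i / (\<Sum>j\<in>{1..N}. x j)) * (1 / real ((N - 1) choose (n - 1))) else 0)"

definition rej_params :: "nat \<Rightarrow> (nat \<Rightarrow> real) \<Rightarrow> bool" where
  "rej_params N \<alpha> \<longleftrightarrow> (\<forall>i\<in>{1..N}. 0 < \<alpha> i) \<and> (\<Sum>i\<in>{1..N}. \<alpha> i) = 1"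

text \<open>Rejective design: n i.i.d. draws with replacement with probabilities alpha_i, repeated
  until the n drawn units are distinct; i.e. the law of the set of drawn units conditional on
  the draw sequence (f 0, ..., f (n-1)) being injective.\<close>
definition rejective :: "nat \<Rightarrow> nat \<Rightarrow> (nat \<Rightarrow> real) \<Rightarrow> nat set \<Rightarrow> real" where
  "rejective N n \<alpha> s =
     (\<Sum>f\<in>{f\<in>{..<n} \<rightarrow>\<^sub>E {1..N}. inj_on f {..<n} \<and> f ` {..<n} = s}. \<Prod>k<n. \<alpha> (f k)) /
     (\<Sum>f\<in>{f\<in>{..<n} \<rightarrow>\<^sub>E {1..N}. inj_on f {..<n}}. \<Prod>k<n. \<alpha> (f k))"

definition kl_div :: "nat \<Rightarrow> nat \<Rightarrow> (nat set \<Rightarrow> real) \<Rightarrow> (nat set \<Rightarrow> real) \<Rightarrow> real" where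
  "kl_div N n p r = (\<Sum>s\<in>samples N n. p s * ln (p s / r s))"

definition high_entropy ::
  "'a measure \<Rightarrow> (nat \<Rightarrow> nat) \<Rightarrow> (nat \<Rightarrow> nat) \<Rightarrow> (nat \<Rightarrow> 'a \<Rightarrow> nat set \<Rightarrow> real) \<Rightarrow> bool" where
  "high_entropy M N n p \<longleftrightarrow> (\<exists>\<alpha> :: nat \<Rightarrow> 'a \<Rightarrow> nat \<Rightarrow> real.
     AE \<omega> in M. (\<forall>\<nu>. rej_params (N \<nu>) (\<alpha> \<nu> \<omega>)) \<and>
       (\<lambda>\<nu>. kl_div (N \<nu>) (n \<nu>) (p \<nu> \<omega>) (rejective (N \<nu>) (n \<nu>) (\<alpha> \<nu> \<omega>))) \<longlonglongrightarrow> 0)"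

definition pips ::
  "'a measure \<Rightarrow> (nat \<Rightarrow> nat) \<Rightarrow> (nat \<Rightarrow> nat) \<Rightarrow> (nat \<Rightarrow> 'a \<Rightarrow> real)
     \<Rightarrow> (nat \<Rightarrow> 'a \<Rightarrow> nat set \<Rightarrow> real) \<Rightarrow> bool" where
  "pips M N n X p \<longleftrightarrow> (AE \<omega> in M. \<forall>\<^sub>F \<nu> in sequentially. \<forall>i\<in>{1..N \<nu>}.
      incl_prob (N \<nu>) (n \<nu>) (p \<nu> \<omega>) i = real (n \<nu>) * X i \<omega> / (\<Sum>j\<in>{1..N \<nu>}. X j \<omega>))"

definition incl_bounded ::
  "'a measure \<Rightarrow> (nat \<Rightarrow> nat) \<Rightarrow> (nat \<Rightarrow> nat) \<Rightarrow> (nat \<Rightarrow> 'a \<Rightarrow> nat set \<Rightarrow> real) \<Rightarrow> bool" where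
  "incl_bounded M N n p \<longleftrightarrow> (AE \<omega> in M. \<exists>c C. 0 < c \<and> 0 < C \<and>
     (\<forall>\<^sub>F \<nu> in sequentially. \<forall>i\<in>{1..N \<nu>}.
        c \<le> real (N \<nu>) * incl_prob (N \<nu>) (n \<nu>) (p \<nu> \<omega>) i / real (n \<nu>) \<and>
        real (N \<nu>) * incl_prob (N \<nu>) (n \<nu>) (p \<nu> \<omega>) i / real (n \<nu>) \<le> C))"

end

theory Submission
  imports Defs "HOL-Probability.Probability"
begin
lemma finite_samples: "finite (samples N n)"
  unfolding samples_def by (rule finite_subset[of _ "Pow {1..N}"]) auto

lemma card_samples_sup:
  assumes F: "F \<subseteq> {1..N}" "card F \<le> n"
  shows "card {s \<in> samples N n. F \<subseteq> s} = (N - card F) choose (n - card F)"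
proof -
  have fF: "finite F" using F(1) finite_subset by blast
  have "bij_betw (\<lambda>s. s - F) {s \<in> samples N n. F \<subseteq> s} {t. t \<subseteq> {1..N} - F \<and> card t = n - card F}"
  proof (rule bij_betwI[where g = "\<lambda>t. t \<union> F"])
    show "(\<lambda>s. s - F) \<in> {s \<in> samples N n. F \<subseteq> s} \<rightarrow> {t. t \<subseteq> {1..N} - F \<and> card t = n - card F}"
      using fF by (auto simp: samples_def card_Diff_subset)
    show "(\<lambda>t. t \<union> F) \<in> {t. t \<subseteq> {1..N} - F \<and> card t = n - card F} \<rightarrow> {s \<in> samples N n. F \<subseteq> s}"
    proof
      fix t assume t: "t \<in> {t. t \<subseteq> {1..N} - F \<and> card t = n - card F}"
      have ft: "finite t" using t finite_subset by blast
      have "card (t \<union> F) = card t + card F" using t ft fF by (intro card_Un_disjoint) auto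
      then show "t \<union> F \<in> {s \<in> samples N n. F \<subseteq> s}" using t F by (auto simp: samples_def)
    qed
  qed auto
  then have "card {s \<in> samples N n. F \<subseteq> s} = card {t. t \<subseteq> {1..N} - F \<and> card t = n - card F}"
    by (rule bij_betw_same_card)
  also have "\<dots> = card ({1..N} - F) choose (n - card F)" by (rule n_subsets) simp
  also have "card ({1..N} - F) = N - card F" using F fF by (simp add: card_Diff_subset)
  finally show ?thesis .
qed

lemma sum_in_sample:
  assumes "s \<in> samples N n"
  shows "(\<Sum>i\<in>s. f i) = (\<Sum>i\<in>{1..N}. if i \<in> s then f i else (0::real))"
proof -
  have "s \<subseteq> {1..N}" using assms by (auto simp: samples_def)
  then have "s = {i\<in>{1..N}. i \<in> s}" by auto
  then show ?thesis by (metis (no_types) finite_atLeastAtMost sum.inter_filter)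
qed

lemma sum_card_filter:
  assumes "finite S"
  shows "(\<Sum>s\<in>S. if P s then c else (0::real)) = c * card {s\<in>S. P s}"
  using assms by (simp add: sum.inter_filter[symmetric])

lemma first_moment:
  assumes "1 \<le> n"
  shows "(\<Sum>s\<in>samples N n. \<Sum>i\<in>s. x i) = real ((N - 1) choose (n - 1)) * (\<Sum>i\<in>{1..N}. x i)"
proof -
  have "(\<Sum>s\<in>samples N n. \<Sum>i\<in>s. x i)
      = (\<Sum>s\<in>samples N n. \<Sum>i\<in>{1..N}. if i \<in> s then x i else 0)"
    by (intro sum.cong refl sum_in_sample)
  also have "\<dots> = (\<Sum>i\<in>{1..N}. \<Sum>s\<in>samples N n. if i \<in> s then x i else 0)"
    by (rule sum.swap)
  also have "\<dots> = (\<Sum>i\<in>{1..N}. x i * card {s\<in>samples N n. {i} \<subseteq> s})"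
    by (intro sum.cong refl) (simp add: sum_card_filter finite_samples)
  also have "\<dots> = (\<Sum>i\<in>{1..N}. x i * real ((N - 1) choose (n - 1)))"
    using assms by (intro sum.cong refl) (subst card_samples_sup, auto)
  finally show ?thesis by (simp add: sum_distrib_right mult.commute)
qed

lemma second_moment:
  assumes "2 \<le> n"
  shows "(\<Sum>s\<in>samples N n. (\<Sum>i\<in>s. x i)^2) = real ((N - 1) choose (n - 1)) * (\<Sum>i\<in>{1..N}. (x i)^2)
     + real ((N - 2) choose (n - 2)) * ((\<Sum>i\<in>{1..N}. x i)^2 - (\<Sum>i\<in>{1..N}. (x i)^2))"
proof -
  define A where "A = {1..N}"
  define B1 where "B1 = real ((N - 1) choose (n - 1))"
  define B2 where "B2 = real ((N - 2) choose (n - 2))"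
  have g: "card {s\<in>samples N n. {i, j} \<subseteq> s} = (if i = j then B1 else B2)" if "i \<in> A" "j \<in> A" for i j
  proof (cases "i = j")
    case True then show ?thesis using that assms card_samples_sup[of "{j}" N n] by (simp add: A_def B1_def)
  next
    case False then show ?thesis using that assms by (subst card_samples_sup) (auto simp: A_def B2_def numeral_2_eq_2)
  qed
  have "(\<Sum>s\<in>samples N n. (\<Sum>i\<in>s. x i)^2)
      = (\<Sum>s\<in>samples N n. \<Sum>i\<in>A. \<Sum>j\<in>A. if {i, j} \<subseteq> s then x i * x j else 0)"
  proof (intro sum.cong refl)
    fix s assume s: "s \<in> samples N n"
    have "(\<Sum>i\<in>s. x i)^2 = (\<Sum>i\<in>A. if i \<in> s then x i else 0) * (\<Sum>j\<in>A. if j \<in> s then x j else 0)"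
      using sum_in_sample[OF s] by (simp add: power2_eq_square A_def)
    also have "\<dots> = (\<Sum>i\<in>A. \<Sum>j\<in>A. if {i, j} \<subseteq> s then x i * x j else 0)"
      by (simp add: sum_product) (intro sum.cong refl, auto)
    finally show "(\<Sum>i\<in>s. x i)^2 = (\<Sum>i\<in>A. \<Sum>j\<in>A. if {i, j} \<subseteq> s then x i * x j else 0)" .
  qed
  also have "\<dots> = (\<Sum>i\<in>A. \<Sum>j\<in>A. \<Sum>s\<in>samples N n. if {i, j} \<subseteq> s then x i * x j else 0)"
    by (simp add: sum.swap[of _ "samples N n"])
  also have "\<dots> = (\<Sum>i\<in>A. \<Sum>j\<in>A. x i * x j * (if i = j then B1 else B2))"
  proof (intro sum.cong refl)
    fix i j assume "i \<in> A" "j \<in> A"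
    then show "(\<Sum>s\<in>samples N n. if {i, j} \<subseteq> s then x i * x j else 0) = x i * x j * (if i = j then B1 else B2)"
      by (subst sum_card_filter[OF finite_samples], subst g) auto
  qed
  also have "\<dots> = (\<Sum>i\<in>A. x i * x i * B1 + x i * B2 * (\<Sum>j\<in>A - {i}. x j))"
  proof (intro sum.cong refl)
    fix i assume i: "i \<in> A"
    have "(\<Sum>j\<in>A. x i * x j * (if i = j then B1 else B2)) = x i * x i * B1 + (\<Sum>j\<in>A - {i}. x i * x j * (if i = j then B1 else B2))"
      using i by (subst sum.remove[of _ i]) (auto simp: A_def)
    also have "(\<Sum>j\<in>A - {i}. x i * x j * (if i = j then B1 else B2)) = (\<Sum>j\<in>A - {i}. x i * B2 * x j)"
      by (intro sum.cong refl) auto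
    finally show "(\<Sum>j\<in>A. x i * x j * (if i = j then B1 else B2)) = x i * x i * B1 + x i * B2 * (\<Sum>j\<in>A - {i}. x j)"
      by (simp add: sum_distrib_left)
  qed
  also have "\<dots> = (\<Sum>i\<in>A. B1 * (x i)^2 + B2 * (x i * (\<Sum>j\<in>A. x j) - (x i)^2))"
  proof (intro sum.cong refl)
    fix i assume i: "i \<in> A"
    have "(\<Sum>j\<in>A - {i}. x j) = (\<Sum>j\<in>A. x j) - x i" using i by (simp add: sum_diff1 A_def)
    then show "x i * x i * B1 + x i * B2 * (\<Sum>j\<in>A - {i}. x j) = B1 * (x i)^2 + B2 * (x i * (\<Sum>j\<in>A. x j) - (x i)^2)"
      unfolding power2_eq_square by (simp only:) (simp add: algebra_simps)
  qed
  also have "\<dots> = B1 * (\<Sum>i\<in>A. (x i)^2) + B2 * ((\<Sum>i\<in>A. x i)^2 - (\<Sum>i\<in>A. (x i)^2))"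
    by (simp add: sum.distrib sum_distrib_left[symmetric] sum_subtractf power2_eq_square sum_distrib_right[symmetric])
  finally show ?thesis by (simp add: A_def B1_def B2_def)
qed

definition Injs :: "nat \<Rightarrow> nat \<Rightarrow> (nat \<Rightarrow> nat) set" where
  "Injs N n = {f\<in>{..<n} \<rightarrow>\<^sub>E {1..N}. inj_on f {..<n}}"

definition Bijs :: "nat \<Rightarrow> nat \<Rightarrow> nat set \<Rightarrow> (nat \<Rightarrow> nat) set" where
  "Bijs N n s = {f\<in>Injs N n. f ` {..<n} = s}"

lemma finite_Injs: "finite (Injs N n)"
  unfolding Injs_def by (rule finite_subset[of _ "{..<n} \<rightarrow>\<^sub>E {1..N}"]) (auto intro: finite_PiE)

lemma finite_Bijs: "finite (Bijs N n s)"
  unfolding Bijs_def using finite_Injs by simp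

lemma card_Bijs_le:
  assumes s: "s \<in> samples N n" and t: "t \<in> samples N n"
  shows "card (Bijs N n s) \<le> card (Bijs N n t)"
proof -
  have fs: "finite s" and ft: "finite t" and cst: "card s = card t" and tsub: "t \<subseteq> {1..N}"
    using s t by (auto simp: samples_def intro: finite_subset)
  obtain h where h: "bij_betw h s t" using fs ft cst by (metis bij_betw_iff_card)
  define F where "F f = restrict (h \<circ> f) {..<n}" for f :: "nat \<Rightarrow> nat"
  have "inj_on F (Bijs N n s)"
  proof (rule inj_onI)
    fix f g assume f: "f \<in> Bijs N n s" and g: "g \<in> Bijs N n s" and e: "F f = F g"
    show "f = g"
    proof
      fix k show "f k = g k"
      proof (cases "k < n")
        case True
        then have "h (f k) = h (g k)" using fun_cong[OF e, of k] by (simp add: F_def)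
        moreover have "f k \<in> s" "g k \<in> s" using f g True by (auto simp: Bijs_def)
        ultimately show ?thesis using h by (auto simp: bij_betw_def inj_on_def)
      next
        case False then show ?thesis using f g by (auto simp: Bijs_def Injs_def PiE_def extensional_def)
      qed
    qed
  qed
  moreover have "F ` Bijs N n s \<subseteq> Bijs N n t"
  proof
    fix g assume "g \<in> F ` Bijs N n s"
    then obtain f where f: "f \<in> Bijs N n s" and g: "g = F f" by auto
    have im: "f ` {..<n} = s" and inj: "inj_on f {..<n}" using f by (auto simp: Bijs_def Injs_def)
    have "(h \<circ> f) ` {..<n} = t" using im h by (metis bij_betw_def image_comp)
    then have img: "g ` {..<n} = t" by (simp add: g F_def)
    have "inj_on (h \<circ> f) {..<n}" using inj h im by (intro comp_inj_on) (auto simp: bij_betw_def)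
    then have "inj_on g {..<n}" by (simp add: g F_def inj_on_def)
    moreover have "g \<in> {..<n} \<rightarrow>\<^sub>E {1..N}" using img tsub by (auto simp: g F_def)
    ultimately show "g \<in> Bijs N n t" using img by (simp add: Bijs_def Injs_def)
  qed
  ultimately show ?thesis by (intro card_inj_on_le[OF _ _ finite_Bijs])
qed

lemma Bijs_nonempty:
  assumes s: "s \<in> samples N n"
  shows "Bijs N n s \<noteq> {}"
proof -
  have fs: "finite s" and cs: "card s = n" and sub: "s \<subseteq> {1..N}"
    using s by (auto simp: samples_def intro: finite_subset)
  obtain h where h: "bij_betw h {0..<n} s" using ex_bij_betw_nat_finite[OF fs] cs by auto
  have "restrict h {..<n} \<in> Bijs N n s"
  proof -
    have im: "h ` {..<n} = s" and inj: "inj_on h {..<n}" using h by (auto simp: bij_betw_def lessThan_atLeast0)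
    have "restrict h {..<n} ` {..<n} = s" using im by simp
    moreover have "inj_on (restrict h {..<n}) {..<n}" using inj by (simp add: inj_on_def)
    moreover have "restrict h {..<n} \<in> {..<n} \<rightarrow>\<^sub>E {1..N}" using im sub by auto
    ultimately show ?thesis by (simp add: Bijs_def Injs_def)
  qed
  then show ?thesis by auto
qed

lemma rejective_uniform:
  assumes s: "s \<in> samples N n"
  shows "rejective N n (\<lambda>_. 1 / real N) s = 1 / real (N choose n)"
proof -
  define c where "c = card (Bijs N n s)"
  have cB: "card (Bijs N n t) = c" if "t \<in> samples N n" for t
    using card_Bijs_le[OF s that] card_Bijs_le[OF that s] by (simp add: c_def)
  have cpos: "c > 0" using Bijs_nonempty[OF s] finite_Bijs by (simp add: c_def card_gt_0_iff)
  have num: "{f\<in>{..<n} \<rightarrow>\<^sub>E {1..N}. inj_on f {..<n} \<and> f ` {..<n} = s} = Bijs N n s"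
    by (auto simp: Bijs_def Injs_def)
  have den: "{f\<in>{..<n} \<rightarrow>\<^sub>E {1..N}. inj_on f {..<n}} = Injs N n"
    by (auto simp: Injs_def)
  have "card (Injs N n) = (\<Sum>t\<in>samples N n. card {f\<in>Injs N n. f ` {..<n} = t})"
  proof -
    have "(\<lambda>f. f ` {..<n}) ` Injs N n \<subseteq> samples N n"
    proof
      fix t assume "t \<in> (\<lambda>f. f ` {..<n}) ` Injs N n"
      then obtain f where f: "f \<in> Injs N n" and t: "t = f ` {..<n}" by blast
      have "card t = n" using f t card_image[of f "{..<n}"] by (simp add: Injs_def)
      moreover have "t \<subseteq> {1..N}" using f t by (auto simp: Injs_def PiE_def Pi_def)
      ultimately show "t \<in> samples N n" by (simp add: samples_def)
    qed
    then have "(\<Sum>t\<in>samples N n. \<Sum>f\<in>{f\<in>Injs N n. f ` {..<n} = t}. 1) = (\<Sum>f\<in>Injs N n. (1::nat))"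
      by (intro sum.group finite_Injs finite_samples)
    then show ?thesis by simp
  qed
  also have "\<dots> = (\<Sum>t\<in>samples N n. c)"
    using cB by (intro sum.cong refl) (simp add: Bijs_def)
  also have "\<dots> = (N choose n) * c" by (simp add: samples_def n_subsets)
  finally have cI: "card (Injs N n) = (N choose n) * c" .
  show ?thesis
  proof -
    have p0: "(1 / real N) ^ n \<noteq> 0"
    proof (cases "N = 0")
      case True then have "n = 0" using s by (auto simp: samples_def)
      then show ?thesis by simp
    qed simp
    show ?thesis
      unfolding rejective_def num den using cpos p0
      by (simp add: cI c_def[symmetric])
  qed
qed

lemma kl_term_bounds:
  fixes p K :: real
  assumes "0 \<le> p" "0 < K"
  shows "p - 1 / K \<le> p * ln (p / (1 / K)) \<and> p * ln (p / (1 / K)) \<le> K * p^2 - p"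
proof (cases "p = 0")
  case True then show ?thesis using assms by simp
next
  case False
  then have pp: "p > 0" using assms by simp
  define y where "y = p * K"
  have y: "y > 0" using pp assms by (simp add: y_def)
  have e: "p / (1 / K) = y" by (simp add: y_def)
  have u: "ln y \<le> y - 1" using y by (rule ln_le_minus_one)
  have "ln (1 / y) \<le> 1 / y - 1" using y by (intro ln_le_minus_one) simp
  then have l: "1 - 1 / y \<le> ln y" using y by (simp add: ln_div)
  have "p * ln y \<le> p * (y - 1)" using u pp by (intro mult_left_mono) auto
  moreover have "p * (1 - 1 / y) \<le> p * ln y" using l pp by (intro mult_left_mono) auto
  moreover have "p * (1 - 1 / y) = p - 1 / K" using pp assms by (simp add: y_def field_simps)
  moreover have "p * (y - 1) = K * p^2 - p" by (simp add: y_def power2_eq_square algebra_simps)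
  ultimately show ?thesis unfolding e by linarith
qed

lemma arith1:
  fixes N n B1 B2 T Q C :: real
  assumes "2 \<le> n" "n + 1 \<le> N" "T > 0" "B1 > 0" "(n - 1) * B1 = (N - 1) * B2"
    "N * Q \<le> C * T^2" "0 \<le> Q" "0 \<le> C"
  shows "(N / n) * B1 * ((B1 * Q + B2 * (T^2 - Q)) / (T * B1)^2) - 1 \<le> C / n"
proof -
  have B2: "B2 = (n - 1) * B1 / (N - 1)" using assms by (simp add: field_simps)
  have "(N / n) * B1 * ((B1 * Q + B2 * (T^2 - Q)) / (T * B1)^2)
      = N * ((N - 1) * Q + (n - 1) * (T^2 - Q)) / (n * T^2 * (N - 1))"
  proof -
    have n0: "n \<noteq> 0" "N - 1 \<noteq> 0" "T \<noteq> 0" "B1 \<noteq> 0" using assms by auto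
    show ?thesis unfolding B2 using n0 by (simp add: divide_simps power2_eq_square) (simp add: algebra_simps)
  qed
  also have "\<dots> \<le> 1 + C / n"
  proof -
    have d: "n * T^2 * (N - 1) > 0" using assms by simp
    have "(N - n) * (N * Q) \<le> (N - n) * (C * T^2)" using assms
      by (intro mult_left_mono) auto
    then have f1: "N * (N - n) * Q \<le> (N - n) * (C * T^2)" by (simp add: mult_ac)
    have f2: "(N - n) * (C * T^2) \<le> (N - 1) * (C * T^2)" using assms
      by (intro mult_right_mono) auto
    have "N * (n - 1) \<le> n * (N - 1)" using assms by (simp add: algebra_simps)
    then have f3: "N * (n - 1) * T^2 \<le> n * (N - 1) * T^2" 
      by (intro mult_right_mono) auto
    have e1: "N * ((N - 1) * Q + (n - 1) * (T^2 - Q)) = N * (N - n) * Q + N * (n - 1) * T^2"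
      by (simp add: algebra_simps)
    have e2: "(1 + C / n) * (n * T^2 * (N - 1)) = n * (N - 1) * T^2 + (N - 1) * (C * T^2)"
      using assms by (simp add: field_simps)
    have "N * ((N - 1) * Q + (n - 1) * (T^2 - Q)) \<le> (1 + C / n) * (n * T^2 * (N - 1))"
      unfolding e1 e2 using f1 f2 f3 by linarith
    then show ?thesis using d by (simp add: divide_le_eq)
  qed
  finally show ?thesis by simp
qed

lemma binom_rel1: "1 \<le> n \<Longrightarrow> real n * real (N choose n) = real N * real ((N - 1) choose (n - 1))"
proof -
  assume "1 \<le> n"
  then have "n * (N choose n) = N * ((N - 1) choose (n - 1))" by (intro times_binomial_minus1_eq) simp
  then show ?thesis by (metis of_nat_mult)
qed

lemma binom_rel2: "2 \<le> n \<Longrightarrow> 1 \<le> N \<Longrightarrow> (real n - 1) * real ((N - 1) choose (n - 1)) = (real N - 1) * real ((N - 2) choose (n - 2))"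
proof -
  assume n: "2 \<le> n" and N1: "1 \<le> N"
  then have "(n - 1) * ((N - 1) choose (n - 1)) = (N - 1) * ((N - 1 - 1) choose (n - 1 - 1))"
    by (intro times_binomial_minus1_eq) simp
  moreover have "N - 1 - 1 = N - 2" "n - 1 - 1 = n - 2" by simp_all
  ultimately have "(n - 1) * ((N - 1) choose (n - 1)) = (N - 1) * ((N - 2) choose (n - 2))" by simp
  then have "real (n - 1) * real ((N - 1) choose (n - 1)) = real (N - 1) * real ((N - 2) choose (n - 2))"
    by (metis of_nat_mult)
  moreover have "real (n - 1) = real n - 1" using n by simp
  moreover have "real (N - 1) * real ((N - 2) choose (n - 2)) = (real N - 1) * real ((N - 2) choose (n - 2))"
    using N1 by simp
  ultimately show ?thesis by simp
qed

lemma lms_on_samples: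
  "s \<in> samples N n \<Longrightarrow> lms N n x s = (\<Sum>i\<in>s. x i) / ((\<Sum>j\<in>{1..N}. x j) * real ((N - 1) choose (n - 1)))"
  by (simp add: lms_def sum_divide_distrib[symmetric])
lemma sumsq_bound:
  assumes "\<forall>i\<in>{1..N}. 0 < x i" "\<forall>i\<in>{1..N}. \<forall>j\<in>{1..N}. x i \<le> C * x j"
  shows "real N * (\<Sum>i\<in>{1..N}. (x i)^2) \<le> C * (\<Sum>i\<in>{1..N}. x i)^2"
proof -
  have "real N * (\<Sum>i\<in>{1..N}. (x i)^2) = (\<Sum>i\<in>{1..N}. \<Sum>j\<in>{1..N}. x i * x i)"
    by (simp add: sum_distrib_left power2_eq_square)
  also have "\<dots> \<le> (\<Sum>i\<in>{1..N}. \<Sum>j\<in>{1..N}. x i * (C * x j))"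
  proof (intro sum_mono mult_left_mono)
    fix i j assume "i \<in> {1..N}" "j \<in> {1..N}"
    then show "x i \<le> C * x j" "0 \<le> x i" using assms by (auto simp: less_imp_le)
  qed
  also have "\<dots> = C * (\<Sum>i\<in>{1..N}. x i)^2"
    by (simp add: power2_eq_square sum_distrib_left sum_distrib_right mult_ac)
  finally show ?thesis .
qed

lemma kl_lms:
  assumes n2: "2 \<le> n" and nN: "n < N" and pos: "\<forall>i\<in>{1..N}. 0 < x i"
    and rat: "\<forall>i\<in>{1..N}. \<forall>j\<in>{1..N}. x i \<le> C * x j"
  shows "0 \<le> kl_div N n (lms N n x) (rejective N n (\<lambda>_. 1 / real N))
    \<and> kl_div N n (lms N n x) (rejective N n (\<lambda>_. 1 / real N)) \<le> C / n"
proof -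
  define T where "T = (\<Sum>j\<in>{1..N}. x j)"
  define Q where "Q = (\<Sum>j\<in>{1..N}. (x j)^2)"
  define B where "B = real (N choose n)"
  define B1 where "B1 = real ((N - 1) choose (n - 1))"
  define B2 where "B2 = real ((N - 2) choose (n - 2))"
  define S where "S s = (\<Sum>i\<in>s. x i)" for s
  define p where "p s = S s / (T * B1)" for s
  have T: "T > 0" unfolding T_def
  proof (rule sum_pos)
    show "{1..N} \<noteq> {}" using nN by simp
    show "\<And>i. i \<in> {1..N} \<Longrightarrow> 0 < x i" using pos by blast
  qed simp
  have B: "B > 0" using nN by (simp add: B_def)
  have B1: "B1 > 0" using nN by (simp add: B1_def)
  have C: "C \<ge> 0"
  proof -
    have "x 1 \<le> C * x 1" "0 < x 1" using rat pos nN by auto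
    show ?thesis
    proof (rule ccontr)
      assume "\<not> C \<ge> 0"
      then have "C * x 1 < 0" using \<open>0 < x 1\<close> by (simp add: mult_neg_pos)
      then show False using \<open>x 1 \<le> C * x 1\<close> \<open>0 < x 1\<close> by linarith
    qed
  qed
  have cs: "card (samples N n) = N choose n" by (simp add: samples_def n_subsets)
  have S0: "S s \<ge> 0" if "s \<in> samples N n" for s
    unfolding S_def
  proof (rule sum_nonneg)
    fix i assume "i \<in> s"
    then have "i \<in> {1..N}" using that by (auto simp: samples_def)
    then show "0 \<le> x i" using pos by (simp add: less_imp_le)
  qed
  have kl: "kl_div N n (lms N n x) (rejective N n (\<lambda>_. 1 / real N)) = (\<Sum>s\<in>samples N n. p s * ln (p s / (1 / B)))"
    unfolding kl_div_def
    by (intro sum.cong refl) (simp add: rejective_uniform lms_on_samples p_def S_def T_def B1_def B_def)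
  have p0: "p s \<ge> 0" if "s \<in> samples N n" for s using S0[OF that] T B1 by (simp add: p_def)
  have sp: "(\<Sum>s\<in>samples N n. p s) = 1"
    using first_moment[where x=x and N=N and n=n] n2 T B1
    by (simp add: p_def sum_divide_distrib[symmetric] S_def T_def B1_def)
  have sp2: "(\<Sum>s\<in>samples N n. (p s)^2) = (B1 * Q + B2 * (T^2 - Q)) / (T * B1)^2"
    using second_moment[where x=x and N=N and n=n] n2
    by (simp add: p_def power_divide sum_divide_distrib[symmetric] S_def T_def B1_def B2_def Q_def)
  have lo: "(\<Sum>s\<in>samples N n. p s - 1 / B) \<le> (\<Sum>s\<in>samples N n. p s * ln (p s / (1 / B)))"
    using kl_term_bounds[OF p0 B] by (intro sum_mono) auto
  have hi: "(\<Sum>s\<in>samples N n. p s * ln (p s / (1 / B))) \<le> (\<Sum>s\<in>samples N n. B * (p s)^2 - p s)"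
    using kl_term_bounds[OF p0 B] by (intro sum_mono) auto
  have lo': "(\<Sum>s\<in>samples N n. p s - 1 / B) = 0"
    using B by (simp add: sum_subtractf sp cs B_def)
  have hi': "(\<Sum>s\<in>samples N n. B * (p s)^2 - p s) = B * ((B1 * Q + B2 * (T^2 - Q)) / (T * B1)^2) - 1"
    by (simp add: sum_subtractf sp sp2 sum_distrib_left[symmetric])
  have Bn: "B = (real N / real n) * B1" using binom_rel1[of n N] n2 by (simp add: B_def B1_def field_simps)
  have ar: "(real N / real n) * B1 * ((B1 * Q + B2 * (T^2 - Q)) / (T * B1)^2) - 1 \<le> C / real n"
  proof (rule arith1)
    show "(real n - 1) * B1 = (real N - 1) * B2" using binom_rel2[OF n2] nN by (simp add: B1_def B2_def)
    show "real N * Q \<le> C * T^2" using sumsq_bound[OF pos rat] by (simp add: Q_def T_def)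
    show "0 \<le> Q" by (simp add: Q_def sum_nonneg)
  qed (use n2 nN T B1 C in auto)
  show ?thesis unfolding kl using lo lo' hi hi' ar Bn by simp
qed


lemma ratio_sum_bounds:
  assumes pos: "\<forall>i\<in>{1..N}. 0 < x i" and rat: "\<forall>i\<in>{1..N}. \<forall>j\<in>{1..N}. x i \<le> C * x j"
    and i: "i \<in> {1..N}"
  shows "real N * x i \<le> C * (\<Sum>j\<in>{1..N}. x j) \<and> (\<Sum>j\<in>{1..N}. x j) \<le> C * (real N * x i)"
proof
  have "real N * x i = (\<Sum>j\<in>{1..N}. x i)" by simp
  also have "\<dots> \<le> (\<Sum>j\<in>{1..N}. C * x j)" using rat i by (intro sum_mono) blast
  finally show "real N * x i \<le> C * (\<Sum>j\<in>{1..N}. x j)" by (simp add: sum_distrib_left)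
  have "(\<Sum>j\<in>{1..N}. x j) \<le> (\<Sum>j\<in>{1..N}. C * x i)" using rat i by (intro sum_mono) blast
  then show "(\<Sum>j\<in>{1..N}. x j) \<le> C * (real N * x i)" by (simp add: mult_ac)
qed

lemma sample_sum_bounds:
  assumes pos: "\<forall>i\<in>{1..N}. 0 < x i" and rat: "\<forall>i\<in>{1..N}. \<forall>j\<in>{1..N}. x i \<le> C * x j"
    and s: "s \<in> samples N n"
  shows "real N * (\<Sum>i\<in>s. x i) \<le> C * real n * (\<Sum>j\<in>{1..N}. x j)
    \<and> real n * (\<Sum>j\<in>{1..N}. x j) \<le> C * real N * (\<Sum>i\<in>s. x i)"
proof
  have sub: "s \<subseteq> {1..N}" and cs: "card s = n" using s by (auto simp: samples_def)
  have "real N * (\<Sum>i\<in>s. x i) = (\<Sum>i\<in>s. real N * x i)" by (simp add: sum_distrib_left)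
  also have "\<dots> \<le> (\<Sum>i\<in>s. C * (\<Sum>j\<in>{1..N}. x j))"
    using ratio_sum_bounds[OF pos rat] sub by (intro sum_mono) blast
  finally show "real N * (\<Sum>i\<in>s. x i) \<le> C * real n * (\<Sum>j\<in>{1..N}. x j)" using cs by (simp add: mult_ac)
  have "real n * (\<Sum>j\<in>{1..N}. x j) = (\<Sum>i\<in>s. (\<Sum>j\<in>{1..N}. x j))" using cs by simp
  also have "\<dots> \<le> (\<Sum>i\<in>s. C * (real N * x i))"
    using ratio_sum_bounds[OF pos rat] sub by (intro sum_mono) blast
  finally show "real n * (\<Sum>j\<in>{1..N}. x j) \<le> C * real N * (\<Sum>i\<in>s. x i)"
    by (simp add: sum_distrib_left mult_ac)
qed

lemma card_incl: "i \<in> {1..N} \<Longrightarrow> 1 \<le> n \<Longrightarrow> card {s \<in> samples N n. i \<in> s} = (N - 1) choose (n - 1)"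
  using card_samples_sup[of "{i}" N n] by simp

lemma srswor_incl:
  assumes i: "i \<in> {1..N}" and n: "1 \<le> n" "n \<le> N"
  shows "real N * incl_prob N n (srswor N n) i / real n = 1"
proof -
  have "incl_prob N n (srswor N n) i = (\<Sum>s\<in>{s \<in> samples N n. i \<in> s}. 1 / real (N choose n))"
    unfolding incl_prob_def srswor_def by (intro sum.cong refl) auto
  also have "\<dots> = real ((N - 1) choose (n - 1)) / real (N choose n)"
    using card_incl[OF i n(1)] by simp
  finally have P: "incl_prob N n (srswor N n) i = real ((N - 1) choose (n - 1)) / real (N choose n)" .
  have Bp: "real (N choose n) > 0" "real n > 0" using n by auto
  have r: "real N * real ((N - 1) choose (n - 1)) = real n * real (N choose n)"
    using binom_rel1[OF n(1), of N] by simp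
  show ?thesis unfolding P using Bp r by (simp add: field_simps)
qed

lemma lms_incl:
  assumes pos: "\<forall>i\<in>{1..N}. 0 < x i" and rat: "\<forall>i\<in>{1..N}. \<forall>j\<in>{1..N}. x i \<le> C * x j"
    and i: "i \<in> {1..N}" and n: "1 \<le> n" "n < N"
  shows "1 / C \<le> real N * incl_prob N n (lms N n x) i / real n
    \<and> real N * incl_prob N n (lms N n x) i / real n \<le> C"
proof -
  define T where "T = (\<Sum>j\<in>{1..N}. x j)"
  define B1 where "B1 = real ((N - 1) choose (n - 1))"
  define I where "I = {s \<in> samples N n. i \<in> s}"
  have T: "T > 0" unfolding T_def
  proof (rule sum_pos)
    show "{1..N} \<noteq> {}" using n by simp
    show "\<And>i. i \<in> {1..N} \<Longrightarrow> 0 < x i" using pos by blast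
  qed simp
  have B1: "B1 > 0" using n by (simp add: B1_def)
  have C: "C > 0"
  proof -
    have "x i \<le> C * x i" "0 < x i" using rat pos i by auto
    show ?thesis
    proof (rule ccontr)
      assume "\<not> C > 0"
      then have "C * x i \<le> 0" using \<open>0 < x i\<close> by (simp add: mult_nonpos_nonneg)
      then show False using \<open>x i \<le> C * x i\<close> \<open>0 < x i\<close> by linarith
    qed
  qed
  have cI: "real (card I) = B1" using card_incl[OF i n(1)] by (simp add: I_def B1_def)
  have fI: "finite I" unfolding I_def using finite_samples by simp
  have ub: "lms N n x s \<le> C * n / (N * B1)" and lb: "n / (C * N * B1) \<le> lms N n x s" if s: "s \<in> I" for s
  proof -
    have s': "s \<in> samples N n" using s by (simp add: I_def)
    have e: "lms N n x s = (\<Sum>i\<in>s. x i) / (T * B1)" using lms_on_samples[OF s'] by (simp add: T_def B1_def)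
    have b: "real N * (\<Sum>i\<in>s. x i) \<le> C * real n * T" "real n * T \<le> C * real N * (\<Sum>i\<in>s. x i)"
      using sample_sum_bounds[OF pos rat s'] by (simp_all add: T_def)
    have Np: "real N > 0" using n by simp
    show "lms N n x s \<le> C * n / (N * B1)" unfolding e using T B1 Np b(1)
      by (simp add: divide_simps) (simp add: algebra_simps)
    show "n / (C * N * B1) \<le> lms N n x s" unfolding e using T B1 Np C b(2)
      by (simp add: divide_simps) (simp add: algebra_simps)
  qed
  have incl: "incl_prob N n (lms N n x) i = sum (lms N n x) I" by (simp add: incl_prob_def I_def)
  have u: "sum (lms N n x) I \<le> B1 * (C * n / (N * B1))"
    using sum_bounded_above[of I "lms N n x" "C * n / (N * B1)"] ub cI by simp
  have l: "B1 * (n / (C * N * B1)) \<le> sum (lms N n x) I"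
    using sum_bounded_below[of I "n / (C * N * B1)" "lms N n x"] lb cI by simp
  have Np: "real N > 0" "real n > 0" using n by auto
  show ?thesis unfolding incl using u l B1 C Np
    by (auto simp: divide_simps) (simp_all add: algebra_simps)
qed

lemma ratio_from_maxmin:
  fixes x :: "nat \<Rightarrow> real"
  assumes A: "finite A" "A \<noteq> {}" and pos: "\<forall>i\<in>A. 0 < x i" and r: "Max (x ` A) / Min (x ` A) \<le> C"
  shows "\<forall>i\<in>A. \<forall>j\<in>A. x i \<le> max C 1 * x j"
proof (intro ballI)
  fix i j assume i: "i \<in> A" and j: "j \<in> A"
  have "Min (x ` A) \<in> x ` A" using A by (intro Min_in) auto
  then have mp: "Min (x ` A) > 0" using pos by auto
  have "Max (x ` A) \<le> C * Min (x ` A)" using r mp by (simp add: pos_divide_le_eq)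
  moreover have "x i \<le> Max (x ` A)" using A i by (intro Max_ge) auto
  moreover have "Min (x ` A) \<le> x j" using A j by (intro Min_le) auto
  moreover have "C * Min (x ` A) \<le> max C 1 * Min (x ` A)" using mp by (intro mult_right_mono) auto
  moreover have "max C 1 * Min (x ` A) \<le> max C 1 * x j"
    using calculation(3) by (intro mult_left_mono) auto
  ultimately show "x i \<le> max C 1 * x j" by linarith
qed

lemma pips_bounds:
  assumes pos: "\<forall>i\<in>{1..N}. 0 < x i" and rat: "\<forall>i\<in>{1..N}. \<forall>j\<in>{1..N}. x i \<le> D * x j"
    and i: "i \<in> {1..N}" and n: "0 < n" and D: "D > 0"
  shows "1 / D \<le> real N * (real n * x i / (\<Sum>j\<in>{1..N}. x j)) / real n
    \<and> real N * (real n * x i / (\<Sum>j\<in>{1..N}. x j)) / real n \<le> D"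
proof -
  define T where "T = (\<Sum>j\<in>{1..N}. x j)"
  have T: "T > 0" unfolding T_def
  proof (rule sum_pos)
    show "{1..N} \<noteq> {}" using i by auto
    show "\<And>i. i \<in> {1..N} \<Longrightarrow> 0 < x i" using pos by blast
  qed simp
  have b: "real N * x i \<le> D * T" "T \<le> D * (real N * x i)"
    using ratio_sum_bounds[OF pos rat i] by (simp_all add: T_def)
  have e: "real N * (real n * x i / T) / real n = real N * x i / T" using n by simp
  show ?thesis unfolding T_def[symmetric] e using T D b
    by (auto simp: divide_simps) (simp_all add: algebra_simps)
qed


theorem lemma1:
  fixes M :: "'a measure" and X :: "nat \<Rightarrow> 'a \<Rightarrow> real"
    and N n :: "nat \<Rightarrow> nat"
  assumes "prob_space M"
    and "\<And>i. X i \<in> borel_measurable M"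
    and "prob_space.indep_vars M (\<lambda>_. borel) X {1..}"
    and "\<And>i. i \<ge> 1 \<Longrightarrow> distr M borel (X i) = distr M borel (X 1)"
    and "\<And>i. i \<ge> 1 \<Longrightarrow> AE \<omega> in M. 0 < X i \<omega>"
    and "mono N" and "\<And>\<nu>. n \<nu> < N \<nu>"
    and "filterlim n at_top sequentially" and "filterlim N at_top sequentially"
    \<comment> \<open>(C2)\<close>
    and "\<exists>b. 0 < b \<and> (\<forall>i\<ge>1. AE \<omega> in M. X i \<omega> \<le> b)"
    and "\<And>i. i \<ge> 1 \<Longrightarrow> integrable M (\<lambda>\<omega>. (X i \<omega>) powi (-2))"
    and "AE \<omega> in M. \<exists>C. \<forall>\<^sub>F \<nu> in sequentially.
           Max ((\<lambda>i. X i \<omega>) ` {1..N \<nu>}) / Min ((\<lambda>i. X i \<omega>) ` {1..N \<nu>}) \<le> C"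
  shows "high_entropy M N n (\<lambda>\<nu> \<omega>. lms (N \<nu>) (n \<nu>) (\<lambda>i. X i \<omega>))
    \<and> incl_bounded M N n (\<lambda>\<nu> \<omega>. srswor (N \<nu>) (n \<nu>))
    \<and> incl_bounded M N n (\<lambda>\<nu> \<omega>. lms (N \<nu>) (n \<nu>) (\<lambda>i. X i \<omega>))
    \<and> (\<forall>p. (\<forall>\<nu>. \<forall>\<omega>\<in>space M. is_design (N \<nu>) (n \<nu>) (p \<nu> \<omega>))
           \<and> high_entropy M N n p \<and> pips M N n X p
           \<longrightarrow> incl_bounded M N n p)"
proof -
  note nN = assms(7)
  have n2: "\<forall>\<^sub>F \<nu> in sequentially. 2 \<le> n \<nu>"
    using assms(8) by (simp add: filterlim_at_top)
  have posAE: "AE \<omega> in M. \<forall>i. 1 \<le> i \<longrightarrow> 0 < X i \<omega>"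
  proof (subst AE_all_countable, intro allI)
    fix i :: nat
    show "AE \<omega> in M. 1 \<le> i \<longrightarrow> 0 < X i \<omega>"
    proof (cases "1 \<le> i")
      case True
      from assms(5)[OF True] show ?thesis by (rule eventually_mono) simp
    qed simp
  qed
  define good where "good \<omega> \<longleftrightarrow> (\<exists>D>0. \<forall>\<^sub>F \<nu> in sequentially. 2 \<le> n \<nu> \<and>
      (\<forall>i\<in>{1..N \<nu>}. 0 < X i \<omega>) \<and> (\<forall>i\<in>{1..N \<nu>}. \<forall>j\<in>{1..N \<nu>}. X i \<omega> \<le> D * X j \<omega>))" for \<omega>
  have AEgood: "AE \<omega> in M. good \<omega>"
    using posAE assms(12)
  proof (eventually_elim)
    case (elim \<omega>)
    then obtain C where C: "\<forall>\<^sub>F \<nu> in sequentially.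
           Max ((\<lambda>i. X i \<omega>) ` {1..N \<nu>}) / Min ((\<lambda>i. X i \<omega>) ` {1..N \<nu>}) \<le> C" by blast
    have "\<forall>\<^sub>F \<nu> in sequentially. 2 \<le> n \<nu> \<and>
      (\<forall>i\<in>{1..N \<nu>}. 0 < X i \<omega>) \<and> (\<forall>i\<in>{1..N \<nu>}. \<forall>j\<in>{1..N \<nu>}. X i \<omega> \<le> max C 1 * X j \<omega>)"
      using C n2
    proof (eventually_elim)
      case (elim \<nu>)
      have p: "\<forall>i\<in>{1..N \<nu>}. 0 < X i \<omega>" using elim(1) \<open>\<forall>i. 1 \<le> i \<longrightarrow> 0 < X i \<omega>\<close> by auto
      have "{1..N \<nu>} \<noteq> {}" using nN[of \<nu>] by auto
      then have "\<forall>i\<in>{1..N \<nu>}. \<forall>j\<in>{1..N \<nu>}. X i \<omega> \<le> max C 1 * X j \<omega>"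
        using ratio_from_maxmin[of "{1..N \<nu>}" "\<lambda>i. X i \<omega>" C] p elim(1) by auto
      then show ?case using p elim(2) by auto
    qed
    then show "good \<omega>" unfolding good_def by (intro exI[of _ "max C 1"]) auto
  qed
  have rn: "filterlim (\<lambda>\<nu>. real (n \<nu>)) at_infinity sequentially"
    by (rule filterlim_at_top_imp_at_infinity, rule filterlim_compose[OF filterlim_real_sequentially assms(8)])
  have P1: "high_entropy M N n (\<lambda>\<nu> \<omega>. lms (N \<nu>) (n \<nu>) (\<lambda>i. X i \<omega>))"
    unfolding high_entropy_def
  proof (intro exI[of _ "\<lambda>\<nu> \<omega> i. 1 / real (N \<nu>)"])
    show "AE \<omega> in M. (\<forall>\<nu>. rej_params (N \<nu>) ((\<lambda>\<nu> \<omega> i. 1 / real (N \<nu>)) \<nu> \<omega>)) \<and>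
      (\<lambda>\<nu>. kl_div (N \<nu>) (n \<nu>) ((\<lambda>\<nu> \<omega>. lms (N \<nu>) (n \<nu>) (\<lambda>i. X i \<omega>)) \<nu> \<omega>)
         (rejective (N \<nu>) (n \<nu>) ((\<lambda>\<nu> \<omega> i. 1 / real (N \<nu>)) \<nu> \<omega>))) \<longlonglongrightarrow> 0"
      using AEgood
    proof (eventually_elim)
      case (elim \<omega>)
      then obtain D where D: "D > 0" and ev: "\<forall>\<^sub>F \<nu> in sequentially. 2 \<le> n \<nu> \<and>
        (\<forall>i\<in>{1..N \<nu>}. 0 < X i \<omega>) \<and> (\<forall>i\<in>{1..N \<nu>}. \<forall>j\<in>{1..N \<nu>}. X i \<omega> \<le> D * X j \<omega>)"
        unfolding good_def by blast
      have rp: "rej_params (N \<nu>) (\<lambda>i. 1 / real (N \<nu>))" for \<nu>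
        using nN[of \<nu>] by (simp add: rej_params_def)
      define K where "K = (\<lambda>\<nu>. kl_div (N \<nu>) (n \<nu>) (lms (N \<nu>) (n \<nu>) (\<lambda>i. X i \<omega>))
         (rejective (N \<nu>) (n \<nu>) (\<lambda>i. 1 / real (N \<nu>))))"
      have b: "\<forall>\<^sub>F \<nu> in sequentially. 0 \<le> K \<nu> \<and> K \<nu> \<le> D / real (n \<nu>)"
        using ev
      proof eventually_elim
        case (elim \<nu>)
        show ?case unfolding K_def
          using kl_lms[where n="n \<nu>" and N="N \<nu>" and x="\<lambda>i. X i \<omega>" and C=D] elim nN[of \<nu>]
          by simp
      qed
      have "K \<longlonglongrightarrow> 0"
      proof (rule tendsto_sandwich[of "\<lambda>_. 0" K sequentially "\<lambda>\<nu>. D / real (n \<nu>)"])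
        show "\<forall>\<^sub>F \<nu> in sequentially. 0 \<le> K \<nu>" using b by (rule eventually_mono) simp
        show "\<forall>\<^sub>F \<nu> in sequentially. K \<nu> \<le> D / real (n \<nu>)" using b by (rule eventually_mono) simp
        show "(\<lambda>\<nu>. D / real (n \<nu>)) \<longlonglongrightarrow> 0" by (rule tendsto_divide_0[OF tendsto_const rn])
      qed simp
      then show ?case using rp unfolding K_def by simp
    qed
  qed
  have P2: "incl_bounded M N n (\<lambda>\<nu> \<omega>. srswor (N \<nu>) (n \<nu>))"
    unfolding incl_bounded_def
  proof (rule AE_I2)
    fix \<omega>
    have "\<forall>\<^sub>F \<nu> in sequentially. \<forall>i\<in>{1..N \<nu>}.
        1 \<le> real (N \<nu>) * incl_prob (N \<nu>) (n \<nu>) (srswor (N \<nu>) (n \<nu>)) i / real (n \<nu>) \<and>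
        real (N \<nu>) * incl_prob (N \<nu>) (n \<nu>) (srswor (N \<nu>) (n \<nu>)) i / real (n \<nu>) \<le> 1"
      using n2
    proof eventually_elim
      case (elim \<nu>)
      show ?case
      proof
        fix i assume i: "i \<in> {1..N \<nu>}"
        have "1 \<le> n \<nu>" "n \<nu> \<le> N \<nu>" using elim nN[of \<nu>] by auto
        then have "real (N \<nu>) * incl_prob (N \<nu>) (n \<nu>) (srswor (N \<nu>) (n \<nu>)) i / real (n \<nu>) = 1"
          using srswor_incl[OF i] by blast
        then show "1 \<le> real (N \<nu>) * incl_prob (N \<nu>) (n \<nu>) (srswor (N \<nu>) (n \<nu>)) i / real (n \<nu>) \<and>
          real (N \<nu>) * incl_prob (N \<nu>) (n \<nu>) (srswor (N \<nu>) (n \<nu>)) i / real (n \<nu>) \<le> 1" by (simp only: order_refl conj_absorb)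
      qed
    qed
    moreover have "(0::real) < 1" by simp
    ultimately show "\<exists>c C. 0 < c \<and> 0 < C \<and>
     (\<forall>\<^sub>F \<nu> in sequentially. \<forall>i\<in>{1..N \<nu>}.
        c \<le> real (N \<nu>) * incl_prob (N \<nu>) (n \<nu>) ((\<lambda>\<nu> \<omega>. srswor (N \<nu>) (n \<nu>)) \<nu> \<omega>) i / real (n \<nu>) \<and>
        real (N \<nu>) * incl_prob (N \<nu>) (n \<nu>) ((\<lambda>\<nu> \<omega>. srswor (N \<nu>) (n \<nu>)) \<nu> \<omega>) i / real (n \<nu>) \<le> C)"
      by blast
  qed
  have P3: "incl_bounded M N n (\<lambda>\<nu> \<omega>. lms (N \<nu>) (n \<nu>) (\<lambda>i. X i \<omega>))"
    unfolding incl_bounded_def using AEgood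
  proof (eventually_elim)
    case (elim \<omega>)
    then obtain D where D: "D > 0" and ev: "\<forall>\<^sub>F \<nu> in sequentially. 2 \<le> n \<nu> \<and>
      (\<forall>i\<in>{1..N \<nu>}. 0 < X i \<omega>) \<and> (\<forall>i\<in>{1..N \<nu>}. \<forall>j\<in>{1..N \<nu>}. X i \<omega> \<le> D * X j \<omega>)"
      unfolding good_def by blast
    show ?case
    proof (intro exI conjI)
      show "0 < 1 / D" "0 < D" using D by auto
      show "\<forall>\<^sub>F \<nu> in sequentially. \<forall>i\<in>{1..N \<nu>}.
        1 / D \<le> real (N \<nu>) * incl_prob (N \<nu>) (n \<nu>) ((\<lambda>\<nu> \<omega>. lms (N \<nu>) (n \<nu>) (\<lambda>i. X i \<omega>)) \<nu> \<omega>) i / real (n \<nu>) \<and>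
        real (N \<nu>) * incl_prob (N \<nu>) (n \<nu>) ((\<lambda>\<nu> \<omega>. lms (N \<nu>) (n \<nu>) (\<lambda>i. X i \<omega>)) \<nu> \<omega>) i / real (n \<nu>) \<le> D"
        using ev
      proof (eventually_elim)
        case (elim \<nu>)
        show ?case
        proof
          fix i assume i: "i \<in> {1..N \<nu>}"
          show "1 / D \<le> real (N \<nu>) * incl_prob (N \<nu>) (n \<nu>) ((\<lambda>\<nu> \<omega>. lms (N \<nu>) (n \<nu>) (\<lambda>i. X i \<omega>)) \<nu> \<omega>) i / real (n \<nu>) \<and>
            real (N \<nu>) * incl_prob (N \<nu>) (n \<nu>) ((\<lambda>\<nu> \<omega>. lms (N \<nu>) (n \<nu>) (\<lambda>i. X i \<omega>)) \<nu> \<omega>) i / real (n \<nu>) \<le> D"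
            using lms_incl[of "N \<nu>" "\<lambda>i. X i \<omega>" D i "n \<nu>"] elim i nN[of \<nu>] by auto
        qed
      qed
    qed
  qed
  have P4: "incl_bounded M N n p" if "pips M N n X p" for p
    unfolding incl_bounded_def using AEgood that[unfolded pips_def]
  proof (eventually_elim)
    case (elim \<omega>)
    then obtain D where D: "D > 0" and ev: "\<forall>\<^sub>F \<nu> in sequentially. 2 \<le> n \<nu> \<and>
      (\<forall>i\<in>{1..N \<nu>}. 0 < X i \<omega>) \<and> (\<forall>i\<in>{1..N \<nu>}. \<forall>j\<in>{1..N \<nu>}. X i \<omega> \<le> D * X j \<omega>)"
      unfolding good_def by blast
    show ?case
    proof (intro exI conjI)
      show "0 < 1 / D" "0 < D" using D by auto
      show "\<forall>\<^sub>F \<nu> in sequentially. \<forall>i\<in>{1..N \<nu>}.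
        1 / D \<le> real (N \<nu>) * incl_prob (N \<nu>) (n \<nu>) (p \<nu> \<omega>) i / real (n \<nu>) \<and>
        real (N \<nu>) * incl_prob (N \<nu>) (n \<nu>) (p \<nu> \<omega>) i / real (n \<nu>) \<le> D"
        using ev elim(2)
      proof (eventually_elim)
        case (elim \<nu>)
        show ?case
        proof
          fix i assume i: "i \<in> {1..N \<nu>}"
          have e: "incl_prob (N \<nu>) (n \<nu>) (p \<nu> \<omega>) i = real (n \<nu>) * X i \<omega> / (\<Sum>j\<in>{1..N \<nu>}. X j \<omega>)"
            using elim(2) i by blast
          show "1 / D \<le> real (N \<nu>) * incl_prob (N \<nu>) (n \<nu>) (p \<nu> \<omega>) i / real (n \<nu>) \<and>
            real (N \<nu>) * incl_prob (N \<nu>) (n \<nu>) (p \<nu> \<omega>) i / real (n \<nu>) \<le> D"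
            unfolding e using pips_bounds[of "N \<nu>" "\<lambda>i. X i \<omega>" D i "n \<nu>"] elim(1) i D by auto
        qed
      qed
    qed
  qed
  show ?thesis using P1 P2 P3 P4 by blast
qed

end
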